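(* Let $A$ be a commutative $K$-algebra, $\mathcal{D}=\mathcal{D}(A)$, and $\mathcal{D}_{[0]}=\{\delta\in\mathcal{D}\mid\delta*1=0\}$. Then: (1) The set of left $\mathcal{D}$-submodules of the $\mathcal{D}$-module $A$ equals the set of $\mathcal{D}$-stable ideals of $A$ (ideals $\mathfrak{a}$ with $\mathcal{D}*\mathfrak{a}\subseteq\mathfrak{a}$). (2) The $\mathcal{D}$-module $A$ is simple if and only if $A$ has no nonzero proper $\mathcal{D}$-stable ideal. (3) The map $\mathfrak{a}\mapsto\mathfrak{a}+\mathcal{D}_{[0]}$, from the set of $\mathcal{D}$-stable ideals of $A$ containing $\mathcal{D}_{[0]}*A$ to the set of ideals of $\mathcal{D}$ containing $\mathcal{D}_{[0]}$, is a bijection with inverse $I\mapsto I\cap A$. The ideal $\mathcal{D}\mathcal{D}_{[0]}\mathcal{D}=\mathcal{D}_{[0]}*A+\mathcal{D}_{[0]}$ is the least ideal of $\mathcal{D}$ containing $\mathcal{D}_{[0]}$, and $\mathcal{D}_{[0]}*A=A\cap\mathcal{D}\mathcal{D}_{[0]}\mathcal{D}$ is a $\mathcal{D}$-stable ideal of $A$.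
   Context: $\mathcal{D}(A)=\bigcup_{i\ge0}\mathcal{D}(A)_i\subseteq\mathrm{End}_K(A)$ with $\mathcal{D}(A)_{-1}=0$, $\mathcal{D}(A)_i=\{u\mid au-ua\in\mathcal{D}(A)_{i-1}\ \forall a\in A\}$; $A\subseteq\mathcal{D}(A)$ via multiplication operators. $A$ is a left $\mathcal{D}(A)$-module via $\delta*a=\delta(a)$, and $\mathcal{D}_{[0]}*A$ denotes the $K$-span of $\{\delta*a\mid\delta\in\mathcal{D}_{[0]},a\in A\}$. *)

theory Defs
  imports Main
begin

text \<open>The commutative K-algebra A is modelled as a type 'a of class comm_ring_1, with the
  structure map phi : K -> A (a ring homomorphism from a commutative ring 'k).
  Operators on A are functions 'a => 'a; D(A) is a ring under pointwise addition and composition.\<close>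

definition alg_hom :: "('k::comm_ring_1 \<Rightarrow> 'a::comm_ring_1) \<Rightarrow> bool" where
  "alg_hom \<phi> \<longleftrightarrow> \<phi> 1 = 1 \<and> (\<forall>x y. \<phi> (x + y) = \<phi> x + \<phi> y) \<and> (\<forall>x y. \<phi> (x * y) = \<phi> x * \<phi> y)"

definition Klin :: "('k::comm_ring_1 \<Rightarrow> 'a::comm_ring_1) \<Rightarrow> ('a \<Rightarrow> 'a) \<Rightarrow> bool" where
  "Klin \<phi> u \<longleftrightarrow> (\<forall>x y. u (x + y) = u x + u y) \<and> (\<forall>k x. u (\<phi> k * x) = \<phi> k * u x)"

definition mop :: "'a::comm_ring_1 \<Rightarrow> 'a \<Rightarrow> 'a" where
  "mop a = (\<lambda>x. a * x)"

text \<open>Dfilt phi n = D(A)_(n-1); so Dfilt phi 0 = D(A)_(-1) = 0.\<close>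
fun Dfilt :: "('k::comm_ring_1 \<Rightarrow> 'a::comm_ring_1) \<Rightarrow> nat \<Rightarrow> ('a \<Rightarrow> 'a) set" where
  "Dfilt \<phi> 0 = {\<lambda>x. 0}"
| "Dfilt \<phi> (Suc n) = {u. Klin \<phi> u \<and> (\<forall>a. (\<lambda>x. a * u x - u (a * x)) \<in> Dfilt \<phi> n)}"

definition Diff :: "('k::comm_ring_1 \<Rightarrow> 'a::comm_ring_1) \<Rightarrow> ('a \<Rightarrow> 'a) set" where
  "Diff \<phi> = (\<Union>n. Dfilt \<phi> n)"

definition D0 :: "('k::comm_ring_1 \<Rightarrow> 'a::comm_ring_1) \<Rightarrow> ('a \<Rightarrow> 'a) set" where
  "D0 \<phi> = {\<delta> \<in> Diff \<phi>. \<delta> 1 = 0}"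

definition ideal_of :: "'a::comm_ring_1 set \<Rightarrow> bool" where
  "ideal_of I \<longleftrightarrow> 0 \<in> I \<and> (\<forall>x\<in>I. \<forall>y\<in>I. x + y \<in> I) \<and> (\<forall>a. \<forall>x\<in>I. a * x \<in> I)"

definition Dstable_ideal :: "('k::comm_ring_1 \<Rightarrow> 'a::comm_ring_1) \<Rightarrow> 'a set \<Rightarrow> bool" where
  "Dstable_ideal \<phi> I \<longleftrightarrow> ideal_of I \<and> (\<forall>\<delta>\<in>Diff \<phi>. \<forall>x\<in>I. \<delta> x \<in> I)"

definition Dsubmodule :: "('k::comm_ring_1 \<Rightarrow> 'a::comm_ring_1) \<Rightarrow> 'a set \<Rightarrow> bool" where
  "Dsubmodule \<phi> M \<longleftrightarrow> 0 \<in> M \<and> (\<forall>x\<in>M. \<forall>y\<in>M. x + y \<in> M) \<and> (\<forall>x\<in>M. - x \<in> M)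
     \<and> (\<forall>\<delta>\<in>Diff \<phi>. \<forall>x\<in>M. \<delta> x \<in> M)"

definition Dsimple :: "('k::comm_ring_1 \<Rightarrow> 'a::comm_ring_1) \<Rightarrow> bool" where
  "Dsimple \<phi> \<longleftrightarrow> (UNIV::'a set) \<noteq> {0} \<and> (\<forall>M. Dsubmodule \<phi> M \<longrightarrow> M = {0} \<or> M = UNIV)"

definition Dideal :: "('k::comm_ring_1 \<Rightarrow> 'a::comm_ring_1) \<Rightarrow> ('a \<Rightarrow> 'a) set \<Rightarrow> bool" where
  "Dideal \<phi> I \<longleftrightarrow> I \<subseteq> Diff \<phi> \<and> (\<lambda>x. 0) \<in> I \<and> (\<forall>u\<in>I. \<forall>v\<in>I. (\<lambda>x. u x + v x) \<in> I)
     \<and> (\<forall>u\<in>I. (\<lambda>x. - u x) \<in> I)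
     \<and> (\<forall>d\<in>Diff \<phi>. \<forall>u\<in>I. d \<circ> u \<in> I \<and> u \<circ> d \<in> I)"

inductive_set D0A :: "('k::comm_ring_1 \<Rightarrow> 'a::comm_ring_1) \<Rightarrow> 'a set" for \<phi> where
  zero: "0 \<in> D0A \<phi>"
| gen: "\<delta> \<in> D0 \<phi> \<Longrightarrow> \<delta> a \<in> D0A \<phi>"
| smult: "x \<in> D0A \<phi> \<Longrightarrow> \<phi> k * x \<in> D0A \<phi>"
| add: "x \<in> D0A \<phi> \<Longrightarrow> y \<in> D0A \<phi> \<Longrightarrow> x + y \<in> D0A \<phi>"

inductive_set DD0D :: "('k::comm_ring_1 \<Rightarrow> 'a::comm_ring_1) \<Rightarrow> ('a \<Rightarrow> 'a) set" for \<phi> where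
  zero: "(\<lambda>x. 0) \<in> DD0D \<phi>"
| gen: "d \<in> Diff \<phi> \<Longrightarrow> \<delta> \<in> D0 \<phi> \<Longrightarrow> e \<in> Diff \<phi> \<Longrightarrow> d \<circ> \<delta> \<circ> e \<in> DD0D \<phi>"
| add: "u \<in> DD0D \<phi> \<Longrightarrow> v \<in> DD0D \<phi> \<Longrightarrow> (\<lambda>x. u x + v x) \<in> DD0D \<phi>"
| neg: "u \<in> DD0D \<phi> \<Longrightarrow> (\<lambda>x. - u x) \<in> DD0D \<phi>"

text \<open>For a subset a of A (viewed in D via multiplication operators) and S in D: a + S.\<close>
definition opsum :: "'a::comm_ring_1 set \<Rightarrow> ('a \<Rightarrow> 'a) set \<Rightarrow> ('a \<Rightarrow> 'a) set" where
  "opsum a S = {(\<lambda>x. mop b x + \<delta> x) | b \<delta>. b \<in> a \<and> \<delta> \<in> S}"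

definition capA :: "('a::comm_ring_1 \<Rightarrow> 'a) set \<Rightarrow> 'a set" where
  "capA I = {b. mop b \<in> I}"

end

theory Submission
  imports Defs
begin

lemma Klin_add: "Klin \<phi> u \<Longrightarrow> u (x+y) = u x + u y" by (simp add: Klin_def)
lemma Klin_0: "Klin \<phi> u \<Longrightarrow> u 0 = 0"
  using Klin_add[of \<phi> u 0 0] by simp
lemma Klin_neg: "Klin \<phi> u \<Longrightarrow> u (- x) = - u x"
  using Klin_add[of \<phi> u x "-x"] Klin_0[of \<phi> u] by (simp add: eq_neg_iff_add_eq_0 add.commute)
lemma Klin_diff: "Klin \<phi> u \<Longrightarrow> u (x - y) = u x - u y"
  using Klin_add[of \<phi> u x "-y"] Klin_neg[of \<phi> u y] by simp
lemma Klin_smult: "Klin \<phi> u \<Longrightarrow> u (\<phi> k * x) = \<phi> k * u x" by (simp add: Klin_def)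

lemma Dfilt_Klin: "u \<in> Dfilt \<phi> n \<Longrightarrow> Klin \<phi> u"
  by (cases n) (auto simp: Klin_def)

lemma zero_Dfilt: "(\<lambda>x. 0) \<in> Dfilt \<phi> n"
  by (induction n) (auto simp: Klin_def)

lemma Dfilt_mono_Suc: "Dfilt \<phi> n \<subseteq> Dfilt \<phi> (Suc n)"
proof (induction n)
  case 0 then show ?case using zero_Dfilt[of \<phi> 1] by simp
next
  case (Suc n) then show ?case by auto
qed

lemma Dfilt_mono: "n \<le> m \<Longrightarrow> Dfilt \<phi> n \<subseteq> Dfilt \<phi> m"
  using lift_Suc_mono_le[of "Dfilt \<phi>"] Dfilt_mono_Suc by blast

lemma Dfilt_add: "u \<in> Dfilt \<phi> n \<Longrightarrow> v \<in> Dfilt \<phi> n \<Longrightarrow> (\<lambda>x. u x + v x) \<in> Dfilt \<phi> n"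
proof (induction n arbitrary: u v)
  case 0 then show ?case by simp
next
  case (Suc n)
  have "Klin \<phi> (\<lambda>x. u x + v x)" using Suc.prems by (auto simp: Klin_def algebra_simps)
  moreover have "(\<lambda>x. a * (u x + v x) - (u (a*x) + v (a*x))) \<in> Dfilt \<phi> n" for a
  proof -
    have "(\<lambda>x. a * (u x + v x) - (u (a*x) + v (a*x))) = (\<lambda>x. (a * u x - u (a*x)) + (a * v x - v (a*x)))"
      by (simp add: algebra_simps)
    then show ?thesis using Suc by auto
  qed
  ultimately show ?case by simp
qed

lemma Dfilt_neg: "u \<in> Dfilt \<phi> n \<Longrightarrow> (\<lambda>x. - u x) \<in> Dfilt \<phi> n"
proof (induction n arbitrary: u)
  case 0 then show ?case by simp
next
  case (Suc n)
  have "Klin \<phi> (\<lambda>x. - u x)" using Suc.prems by (auto simp: Klin_def algebra_simps)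
  moreover have "(\<lambda>x. a * (- u x) - (- u (a*x))) \<in> Dfilt \<phi> n" for a
  proof -
    have "(\<lambda>x. a * (- u x) - (- u (a*x))) = (\<lambda>x. - (a * u x - u (a*x)))"
      by (simp add: algebra_simps)
    moreover have "(\<lambda>x. a * u x - u (a*x)) \<in> Dfilt \<phi> n" using Suc.prems by simp
    then have "(\<lambda>x. - (a * u x - u (a*x))) \<in> Dfilt \<phi> n" using Suc.IH by blast
    ultimately show ?thesis by simp
  qed
  ultimately show ?case by simp
qed

lemma Dfilt_comp_aux: "\<forall>n m u v. n + m = k \<longrightarrow> u \<in> Dfilt \<phi> n \<longrightarrow> v \<in> Dfilt \<phi> m \<longrightarrow> u \<circ> v \<in> Dfilt \<phi> (n + m)"
proof (induction k rule: less_induct)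
  case (less k)
  show ?case
  proof (intro allI impI)
    fix n m u v assume k: "n + m = k" and u: "u \<in> Dfilt \<phi> n" and v: "v \<in> Dfilt \<phi> m"
    show "u \<circ> v \<in> Dfilt \<phi> (n + m)"
    proof (cases n)
      case 0 then show ?thesis using u zero_Dfilt[of \<phi> "n+m"] by (simp add: o_def)
    next
      case (Suc n')
      note n = this
      show ?thesis
      proof (cases m)
        case 0
        then have "u \<circ> v = (\<lambda>x. 0)" using v Klin_0[OF Dfilt_Klin[OF u]] by (auto simp: o_def)
        then show ?thesis using zero_Dfilt by simp
      next
        case (Suc m')
        have ku: "Klin \<phi> u" and kv: "Klin \<phi> v" using u v by (auto intro: Dfilt_Klin)
        have "Klin \<phi> (u \<circ> v)" using ku kv by (auto simp: Klin_def)
        moreover have "(\<lambda>x. a * (u \<circ> v) x - (u \<circ> v) (a*x)) \<in> Dfilt \<phi> (n' + m' + 1)" for a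
        proof -
          define cu where "cu = (\<lambda>x. a * u x - u (a*x))"
          define cv where "cv = (\<lambda>x. a * v x - v (a*x))"
          have cu: "cu \<in> Dfilt \<phi> n'" using u n cu_def by auto
          have cv: "cv \<in> Dfilt \<phi> m'" using v Suc cv_def by auto
          have e: "(\<lambda>x. a * (u \<circ> v) x - (u \<circ> v) (a*x)) = (\<lambda>x. (cu \<circ> v) x + (u \<circ> cv) x)"
            by (auto simp: cu_def cv_def Klin_diff[OF ku])
          have "cu \<circ> v \<in> Dfilt \<phi> (n' + m)" using less.IH[of "n'+m", rule_format, OF _ refl cu v] k n by simp
          then have 1: "cu \<circ> v \<in> Dfilt \<phi> (n' + m' + 1)" using Suc by simp
          have "u \<circ> cv \<in> Dfilt \<phi> (n + m')" using less.IH[of "n+m'", rule_format, OF _ refl u cv] k Suc by simp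
          then have 2: "u \<circ> cv \<in> Dfilt \<phi> (n' + m' + 1)" using n by simp
          show ?thesis using Dfilt_add[OF 1 2] e by simp
        qed
        ultimately show ?thesis using n Suc by simp
      qed
    qed
  qed
qed

lemma Diff_Klin: "u \<in> Diff \<phi> \<Longrightarrow> Klin \<phi> u"
  by (auto simp: Diff_def intro: Dfilt_Klin)

lemma Diff_zero: "(\<lambda>x. 0) \<in> Diff \<phi>"
  using zero_Dfilt by (auto simp: Diff_def)

lemma Diff_add: assumes "u \<in> Diff \<phi>" "v \<in> Diff \<phi>" shows "(\<lambda>x. u x + v x) \<in> Diff \<phi>"
proof -
  obtain n m where "u \<in> Dfilt \<phi> n" "v \<in> Dfilt \<phi> m" using assms by (auto simp: Diff_def)
  then have "u \<in> Dfilt \<phi> (max n m)" "v \<in> Dfilt \<phi> (max n m)"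
    using Dfilt_mono[of n "max n m" \<phi>] Dfilt_mono[of m "max n m" \<phi>] by auto
  then have "(\<lambda>x. u x + v x) \<in> Dfilt \<phi> (max n m)" by (rule Dfilt_add)
  then show ?thesis unfolding Diff_def by blast
qed

lemma Diff_neg: "u \<in> Diff \<phi> \<Longrightarrow> (\<lambda>x. - u x) \<in> Diff \<phi>"
  using Dfilt_neg by (auto simp: Diff_def)

lemma Diff_diff: assumes "u \<in> Diff \<phi>" "v \<in> Diff \<phi>" shows "(\<lambda>x. u x - v x) \<in> Diff \<phi>"
  using Diff_add[OF assms(1) Diff_neg[OF assms(2)]] by simp

lemma Diff_comp: assumes "u \<in> Diff \<phi>" "v \<in> Diff \<phi>" shows "u \<circ> v \<in> Diff \<phi>"
proof -
  obtain n m where "u \<in> Dfilt \<phi> n" "v \<in> Dfilt \<phi> m" using assms by (auto simp: Diff_def)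
  then have "u \<circ> v \<in> Dfilt \<phi> (n+m)" using Dfilt_comp_aux[rule_format, OF refl] by blast
  then show ?thesis unfolding Diff_def by blast
qed

lemma mop_Diff: "mop a \<in> Diff \<phi>"
proof -
  have "mop a \<in> Dfilt \<phi> 1"
    by (auto simp: Klin_def mop_def algebra_simps)
  then show ?thesis unfolding Diff_def by blast
qed

lemma id_Diff: "id \<in> Diff \<phi>"
proof -
  have "id = mop 1" by (auto simp: mop_def)
  then show ?thesis using mop_Diff by metis
qed

lemma D0_Diff: "\<delta> \<in> D0 \<phi> \<Longrightarrow> \<delta> \<in> Diff \<phi>" by (simp add: D0_def)

lemma D0_decomp: assumes "w \<in> Diff \<phi>" shows "(\<lambda>x. w x - mop (w 1) x) \<in> D0 \<phi>"
proof -
  have "(\<lambda>x. w x - mop (w 1) x) \<in> Diff \<phi>" by (rule Diff_diff[OF assms mop_Diff])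
  moreover have "w 1 - mop (w 1) 1 = 0" by (simp add: mop_def)
  ultimately show ?thesis unfolding D0_def by simp
qed

lemma mop_zero: "mop 0 = (\<lambda>x. 0)" by (simp add: mop_def)

lemma opsum_char: "opsum I (D0 \<phi>) = {w \<in> Diff \<phi>. w 1 \<in> I}"
proof
  show "opsum I (D0 \<phi>) \<subseteq> {w \<in> Diff \<phi>. w 1 \<in> I}"
    using Diff_add[OF mop_Diff D0_Diff] by (auto simp: opsum_def D0_def mop_def)
next
  show "{w \<in> Diff \<phi>. w 1 \<in> I} \<subseteq> opsum I (D0 \<phi>)"
  proof
    fix w assume w: "w \<in> {w \<in> Diff \<phi>. w 1 \<in> I}"
    have "\<exists>b \<delta>. w = (\<lambda>x. mop b x + \<delta> x) \<and> b \<in> I \<and> \<delta> \<in> D0 \<phi>"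
      using w D0_decomp[of w \<phi>]
      by (intro exI[of _ "w 1"] exI[of _ "\<lambda>x. w x - mop (w 1) x"]) auto
    then show "w \<in> opsum I (D0 \<phi>)" unfolding opsum_def by simp
  qed
qed

lemma ideal_neg: "ideal_of I \<Longrightarrow> x \<in> I \<Longrightarrow> - x \<in> I"
  unfolding ideal_of_def by (metis mult_minus1)

lemma ideal_diff: "ideal_of I \<Longrightarrow> x \<in> I \<Longrightarrow> y \<in> I \<Longrightarrow> x - y \<in> I"
  using ideal_neg[of I y] unfolding ideal_of_def by (metis diff_conv_add_uminus)

lemma Diff_val_in:
  assumes I: "ideal_of I" "D0A \<phi> \<subseteq> I" and u: "u \<in> Diff \<phi>" "u 1 \<in> I"
  shows "u y \<in> I"
proof -
  have "(\<lambda>x. u x - mop (u 1) x) y \<in> D0A \<phi>" by (rule D0A.gen[OF D0_decomp[OF u(1)]])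
  then have "u y - u 1 * y \<in> I" using I by (auto simp: mop_def)
  moreover have "u 1 * y \<in> I" using I u by (simp add: ideal_of_def mult.commute)
  ultimately have "(u y - u 1 * y) + u 1 * y \<in> I" using I(1) unfolding ideal_of_def by blast
  then show ?thesis by simp
qed

lemma opsum_Dideal:
  assumes I: "Dstable_ideal \<phi> I" "D0A \<phi> \<subseteq> I"
  shows "Dideal \<phi> (opsum I (D0 \<phi>))"
proof -
  have id: "ideal_of I" using I by (simp add: Dstable_ideal_def)
  have st: "\<And>\<delta> x. \<delta> \<in> Diff \<phi> \<Longrightarrow> x \<in> I \<Longrightarrow> \<delta> x \<in> I" using I by (simp add: Dstable_ideal_def)
  show ?thesis unfolding Dideal_def opsum_char
  proof (intro conjI ballI)
    show "(\<lambda>x. 0) \<in> {w \<in> Diff \<phi>. w 1 \<in> I}" using Diff_zero id by (simp add: ideal_of_def)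
  next
    fix u v assume "u \<in> {w \<in> Diff \<phi>. w 1 \<in> I}" "v \<in> {w \<in> Diff \<phi>. w 1 \<in> I}"
    then show "(\<lambda>x. u x + v x) \<in> {w \<in> Diff \<phi>. w 1 \<in> I}" using Diff_add id by (auto simp: ideal_of_def)
  next
    fix u assume "u \<in> {w \<in> Diff \<phi>. w 1 \<in> I}"
    then show "(\<lambda>x. - u x) \<in> {w \<in> Diff \<phi>. w 1 \<in> I}" using Diff_neg ideal_neg[OF id] by auto
  next
    fix d u assume d: "d \<in> Diff \<phi>" and u: "u \<in> {w \<in> Diff \<phi>. w 1 \<in> I}"
    show "d \<circ> u \<in> {w \<in> Diff \<phi>. w 1 \<in> I}" using Diff_comp[OF d] d u st by simp
    have "u (d 1) \<in> I" using Diff_val_in[OF id I(2)] u by simp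
    then show "u \<circ> d \<in> {w \<in> Diff \<phi>. w 1 \<in> I}" using Diff_comp[OF _ d] u by simp
  qed auto
qed

lemma D0_sub_opsum: "ideal_of I \<Longrightarrow> D0 \<phi> \<subseteq> opsum I (D0 \<phi>)"
  unfolding opsum_char by (auto simp: D0_def ideal_of_def)

lemma capA_opsum: "capA (opsum I (D0 \<phi>)) = I"
  unfolding opsum_char capA_def using mop_Diff by (auto simp: mop_def)

lemma Dideal_add: assumes "Dideal \<phi> J" "u \<in> J" "v \<in> J" shows "(\<lambda>x. u x + v x) \<in> J"
proof -
  have h: "\<forall>u\<in>J. \<forall>v\<in>J. (\<lambda>x. u x + v x) \<in> J" using assms(1) by (simp add: Dideal_def)
  show ?thesis by (rule h[rule_format, OF assms(2,3)])
qed
lemma Dideal_neg: assumes "Dideal \<phi> J" "u \<in> J" shows "(\<lambda>x. - u x) \<in> J"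
proof -
  have h: "\<forall>u\<in>J. (\<lambda>x. - u x) \<in> J" using assms(1) by (simp add: Dideal_def)
  show ?thesis by (rule h[rule_format, OF assms(2)])
qed
lemma Dideal_zero: "Dideal \<phi> J \<Longrightarrow> (\<lambda>x. 0) \<in> J"
  by (simp add: Dideal_def)
lemma Dideal_left: assumes "Dideal \<phi> J" "d \<in> Diff \<phi>" "u \<in> J" shows "d \<circ> u \<in> J"
proof -
  have h: "\<forall>d\<in>Diff \<phi>. \<forall>u\<in>J. d \<circ> u \<in> J \<and> u \<circ> d \<in> J" using assms(1) by (simp add: Dideal_def)
  show ?thesis using h[rule_format, OF assms(2,3)] by (rule conjunct1)
qed
lemma Dideal_right: assumes "Dideal \<phi> J" "d \<in> Diff \<phi>" "u \<in> J" shows "u \<circ> d \<in> J"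
proof -
  have h: "\<forall>d\<in>Diff \<phi>. \<forall>u\<in>J. d \<circ> u \<in> J \<and> u \<circ> d \<in> J" using assms(1) by (simp add: Dideal_def)
  show ?thesis using h[rule_format, OF assms(2,3)] by (rule conjunct2)
qed

lemma Dideal_diff:
  assumes J: "Dideal \<phi> J" and u: "u \<in> J" and v: "v \<in> J"
  shows "(\<lambda>x. u x - v x) \<in> J"
proof -
  have neg: "(\<lambda>x. - v x) \<in> J" using J v unfolding Dideal_def by blast
  have add: "\<forall>u\<in>J. \<forall>v\<in>J. (\<lambda>x. u x + v x) \<in> J" using J unfolding Dideal_def by blast
  show ?thesis using add[rule_format, OF u neg] by simp
qed

lemma Dideal_mop:
  assumes J: "Dideal \<phi> J" "D0 \<phi> \<subseteq> J" and w: "w \<in> J"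
  shows "mop (w 1) \<in> J"
proof -
  have wD: "w \<in> Diff \<phi>" using J w by (auto simp: Dideal_def)
  have "(\<lambda>x. w x - (\<lambda>x. w x - mop (w 1) x) x) \<in> J"
    using Dideal_diff[OF J(1) w] D0_decomp[OF wD] J(2) by blast
  then show ?thesis by simp
qed

lemma capA_Dstable:
  assumes J: "Dideal \<phi> J" "D0 \<phi> \<subseteq> J"
  shows "Dstable_ideal \<phi> (capA J)"
  unfolding Dstable_ideal_def ideal_of_def capA_def
proof (intro conjI ballI allI)
  show "0 \<in> {b. mop b \<in> J}" using J by (simp add: mop_zero Dideal_def)
next
  fix x y assume "x \<in> {b. mop b \<in> J}" "y \<in> {b. mop b \<in> J}"
  moreover have "mop (x + y) = (\<lambda>z. mop x z + mop y z)" by (auto simp: mop_def algebra_simps)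
  ultimately show "x + y \<in> {b. mop b \<in> J}" using J by (simp add: Dideal_def)
next
  fix a x assume "x \<in> {b. mop b \<in> J}"
  moreover have "mop (a * x) = mop a \<circ> mop x" by (auto simp: mop_def)
  moreover have "mop a \<circ> mop x \<in> J" using J mop_Diff \<open>x \<in> {b. mop b \<in> J}\<close> unfolding Dideal_def by blast
  ultimately show "a * x \<in> {b. mop b \<in> J}" by simp
next
  fix \<delta> x assume d: "\<delta> \<in> Diff \<phi>" and x: "x \<in> {b. mop b \<in> J}"
  have "\<delta> \<circ> mop x \<in> J" using J d x by (simp add: Dideal_def)
  from Dideal_mop[OF J this] show "\<delta> x \<in> {b. mop b \<in> J}" by (simp add: mop_def)
qed

lemma D0A_capA:
  assumes J: "Dideal \<phi> J" "D0 \<phi> \<subseteq> J"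
  shows "D0A \<phi> \<subseteq> capA J"
proof
  fix y assume "y \<in> D0A \<phi>"
  then show "y \<in> capA J"
  proof (induction rule: D0A.induct)
    case zero then show ?case using J by (simp add: capA_def mop_zero Dideal_def)
  next
    case (gen \<delta> a)
    have "\<delta> \<in> J" using gen J(2) by blast
    then have "\<delta> \<circ> mop a \<in> J" using J(1) mop_Diff unfolding Dideal_def by blast
    from Dideal_mop[OF J this] show ?case by (simp add: mop_def capA_def)
  next
    case (smult x k)
    have e: "mop (\<phi> k * x) = mop (\<phi> k) \<circ> mop x" by (auto simp: mop_def)
    have "mop x \<in> J" using smult by (simp add: capA_def)
    then have "mop (\<phi> k) \<circ> mop x \<in> J" using J(1) mop_Diff unfolding Dideal_def by blast
    then show ?case by (simp add: capA_def e)
  next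
    case (add x y)
    have "mop (x + y) = (\<lambda>z. mop x z + mop y z)" by (auto simp: mop_def algebra_simps)
    then show ?case using J add by (simp add: Dideal_def capA_def)
  qed
qed

lemma opsum_capA:
  assumes J: "Dideal \<phi> J" "D0 \<phi> \<subseteq> J"
  shows "opsum (capA J) (D0 \<phi>) = J"
  unfolding opsum_char capA_def
proof (intro set_eqI iffI)
  fix w assume "w \<in> {w \<in> Diff \<phi>. w 1 \<in> {b. mop b \<in> J}}"
  then have w: "w \<in> Diff \<phi>" "mop (w 1) \<in> J" by auto
  have "(\<lambda>x. w x - mop (w 1) x) \<in> J" using D0_decomp[OF w(1)] J(2) by (rule rev_subsetD)
  from Dideal_add[OF J(1) w(2) this]
  have "(\<lambda>x. mop (w 1) x + (\<lambda>x. w x - mop (w 1) x) x) \<in> J" by simp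
  then show "w \<in> J" by simp
next
  fix w assume "w \<in> J"
  then show "w \<in> {w \<in> Diff \<phi>. w 1 \<in> {b. mop b \<in> J}}" using J Dideal_mop[OF J] by (auto simp: Dideal_def)
qed

lemma DD0D_Diff: "u \<in> DD0D \<phi> \<Longrightarrow> u \<in> Diff \<phi>"
proof (induction rule: DD0D.induct)
  case zero then show ?case by (rule Diff_zero)
next
  case (gen d \<delta> e) then show ?case using Diff_comp D0_Diff by metis
next
  case (add u v) show ?case using add.IH by (rule Diff_add)
next
  case (neg u) show ?case using neg.IH by (rule Diff_neg)
qed

lemma DD0D_left: "u \<in> DD0D \<phi> \<Longrightarrow> d \<in> Diff \<phi> \<Longrightarrow> d \<circ> u \<in> DD0D \<phi>"
proof (induction rule: DD0D.induct)
  case zero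
  have "d 0 = 0" using Klin_0[OF Diff_Klin[OF zero.prems]] .
  then show ?case using DD0D.zero by (simp add: o_def)
next
  case (gen d' \<delta> e)
  have "d \<circ> (d' \<circ> \<delta> \<circ> e) = (d \<circ> d') \<circ> \<delta> \<circ> e" by (simp add: o_assoc)
  then show ?case using gen Diff_comp DD0D.gen by metis
next
  case (add u v)
  have "d \<circ> (\<lambda>x. u x + v x) = (\<lambda>x. (d \<circ> u) x + (d \<circ> v) x)"
    using Klin_add[OF Diff_Klin[OF add.prems]] by (auto simp: o_def)
  then show ?case using add DD0D.add by metis
next
  case (neg u)
  have "d \<circ> (\<lambda>x. - u x) = (\<lambda>x. - (d \<circ> u) x)"
    using Klin_neg[OF Diff_Klin[OF neg.prems]] by (auto simp: o_def)
  then show ?case using neg DD0D.neg by metis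
qed

lemma DD0D_right: "u \<in> DD0D \<phi> \<Longrightarrow> d \<in> Diff \<phi> \<Longrightarrow> u \<circ> d \<in> DD0D \<phi>"
proof (induction rule: DD0D.induct)
  case zero
  have "(\<lambda>x. 0) \<circ> d = (\<lambda>x. 0)" by (auto simp: o_def)
  then show ?case by (simp add: DD0D.zero)
next
  case (gen d' \<delta> e)
  have "(d' \<circ> \<delta> \<circ> e) \<circ> d = d' \<circ> \<delta> \<circ> (e \<circ> d)" by (simp add: o_assoc)
  then show ?case using gen Diff_comp DD0D.gen by metis
next
  case (add u v)
  have "(\<lambda>x. u x + v x) \<circ> d = (\<lambda>x. (u \<circ> d) x + (v \<circ> d) x)" by (auto simp: o_def)
  then show ?case using add DD0D.add by metis
next
  case (neg u)
  have "(\<lambda>x. - u x) \<circ> d = (\<lambda>x. - (u \<circ> d) x)" by (auto simp: o_def)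
  then show ?case using neg DD0D.neg by metis
qed

lemma DD0D_Dideal: "Dideal \<phi> (DD0D \<phi>)"
  unfolding Dideal_def
proof (intro conjI ballI subsetI)
  show "(\<lambda>x. 0) \<in> DD0D \<phi>" by (rule DD0D.zero)
next
  fix u v assume "u \<in> DD0D \<phi>" "v \<in> DD0D \<phi>"
  then show "(\<lambda>x. u x + v x) \<in> DD0D \<phi>" by (rule DD0D.add)
next
  fix u assume "u \<in> DD0D \<phi>"
  then show "(\<lambda>x. - u x) \<in> DD0D \<phi>" by (rule DD0D.neg)
next
  fix u assume "u \<in> DD0D \<phi>"
  then show "u \<in> Diff \<phi>" by (rule DD0D_Diff)
next
  fix d u assume "d \<in> Diff \<phi>" "u \<in> DD0D \<phi>"
  then show "d \<circ> u \<in> DD0D \<phi>" "u \<circ> d \<in> DD0D \<phi>" using DD0D_left DD0D_right by blast+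
qed

lemma D0_DD0D: "D0 \<phi> \<subseteq> DD0D \<phi>"
proof
  fix \<delta> assume "\<delta> \<in> D0 \<phi>"
  then have "id \<circ> \<delta> \<circ> id \<in> DD0D \<phi>" using DD0D.gen id_Diff by metis
  then show "\<delta> \<in> DD0D \<phi>" by simp
qed

lemma DD0D_min: assumes J: "Dideal \<phi> J" "D0 \<phi> \<subseteq> J" shows "DD0D \<phi> \<subseteq> J"
proof
  fix u assume "u \<in> DD0D \<phi>"
  then show "u \<in> J"
  proof (induction rule: DD0D.induct)
    case zero then show ?case using Dideal_zero[OF J(1)] .
  next
    case (gen d \<delta> e)
    then have "\<delta> \<in> J" using J(2) by blast
    then have "d \<circ> \<delta> \<in> J" using Dideal_left[OF J(1)] gen by blast
    then show ?case using Dideal_right[OF J(1)] gen by blast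
  next
    case (add u v) then show ?case using Dideal_add[OF J(1)] by blast
  next
    case (neg u) then show ?case using Dideal_neg[OF J(1)] by blast
  qed
qed

lemma alg_hom_neg1: "alg_hom \<phi> \<Longrightarrow> \<phi> (-1) = -1"
proof -
  assume h: "alg_hom \<phi>"
  have a: "\<phi> (-1) + \<phi> 1 = \<phi> 0" using h unfolding alg_hom_def by (metis add.left_inverse)
  have "\<phi> 0 = \<phi> 0 + \<phi> 0" using h unfolding alg_hom_def by (metis add_0)
  then have "\<phi> 0 = 0" by simp
  with a h have "\<phi> (-1) + 1 = 0" by (simp add: alg_hom_def)
  then show ?thesis by (simp add: eq_neg_iff_add_eq_0)
qed

lemma D0A_neg: "alg_hom \<phi> \<Longrightarrow> x \<in> D0A \<phi> \<Longrightarrow> - x \<in> D0A \<phi>"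
  using D0A.smult[of x \<phi> "-1"] alg_hom_neg1[of \<phi>] by simp

lemma DD0D_val: "u \<in> DD0D \<phi> \<Longrightarrow> alg_hom \<phi> \<Longrightarrow> u 1 \<in> D0A \<phi>"
proof (induction rule: DD0D.induct)
  case zero then show ?case by (simp add: D0A.zero)
next
  case (gen d \<delta> e)
  have "d \<circ> \<delta> \<in> Diff \<phi>" using gen Diff_comp D0_Diff by blast
  moreover have "(d \<circ> \<delta>) 1 = 0" using gen Klin_0[OF Diff_Klin[OF gen(1)]] by (simp add: D0_def)
  ultimately have "d \<circ> \<delta> \<in> D0 \<phi>" by (simp add: D0_def)
  from D0A.gen[OF this, of "e 1"] show ?case by simp
next
  case (add u v) then show ?case by (simp add: D0A.add)
next
  case (neg u) then show ?case by (simp add: D0A_neg)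
qed

lemma D0A_eq: "alg_hom \<phi> \<Longrightarrow> D0A \<phi> = capA (DD0D \<phi>)"
proof
  show "D0A \<phi> \<subseteq> capA (DD0D \<phi>)" by (rule D0A_capA[OF DD0D_Dideal D0_DD0D])
  assume "alg_hom \<phi>"
  show "capA (DD0D \<phi>) \<subseteq> D0A \<phi>"
  proof
    fix c assume "c \<in> capA (DD0D \<phi>)"
    then have "mop c 1 \<in> D0A \<phi>" using DD0D_val \<open>alg_hom \<phi>\<close> by (simp add: capA_def)
    then show "c \<in> D0A \<phi>" by (simp add: mop_def)
  qed
qed

lemma submod_eq: "Dsubmodule \<phi> M \<longleftrightarrow> Dstable_ideal \<phi> M"
proof
  assume M: "Dsubmodule \<phi> M"
  have "a * x \<in> M" if "x \<in> M" for a x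
    using M that mop_Diff[of a \<phi>] unfolding Dsubmodule_def by (metis mop_def)
  then show "Dstable_ideal \<phi> M" using M unfolding Dsubmodule_def Dstable_ideal_def ideal_of_def by blast
next
  assume M: "Dstable_ideal \<phi> M"
  then have "ideal_of M" by (simp add: Dstable_ideal_def)
  then show "Dsubmodule \<phi> M" using M ideal_neg unfolding Dsubmodule_def Dstable_ideal_def ideal_of_def by blast
qed

theorem proposition3p4:
  fixes \<phi> :: "'k::comm_ring_1 \<Rightarrow> 'a::comm_ring_1"
  assumes "alg_hom \<phi>"
  shows "({M. Dsubmodule \<phi> M} = {I. Dstable_ideal \<phi> I})
    \<and> ((0::'a) \<noteq> 1 \<longrightarrow> (Dsimple \<phi> \<longleftrightarrow> \<not> (\<exists>I. Dstable_ideal \<phi> I \<and> I \<noteq> {0} \<and> I \<noteq> UNIV)))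
    \<and> (bij_betw (\<lambda>I. opsum I (D0 \<phi>))
           {I. Dstable_ideal \<phi> I \<and> D0A \<phi> \<subseteq> I} {J. Dideal \<phi> J \<and> D0 \<phi> \<subseteq> J})
    \<and> (\<forall>I. Dstable_ideal \<phi> I \<and> D0A \<phi> \<subseteq> I \<longrightarrow> capA (opsum I (D0 \<phi>)) = I)
    \<and> (\<forall>J. Dideal \<phi> J \<and> D0 \<phi> \<subseteq> J \<longrightarrow> opsum (capA J) (D0 \<phi>) = J)
    \<and> (DD0D \<phi> = opsum (D0A \<phi>) (D0 \<phi>))
    \<and> (Dideal \<phi> (DD0D \<phi>) \<and> D0 \<phi> \<subseteq> DD0D \<phi>
           \<and> (\<forall>J. Dideal \<phi> J \<and> D0 \<phi> \<subseteq> J \<longrightarrow> DD0D \<phi> \<subseteq> J))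
    \<and> (D0A \<phi> = capA (DD0D \<phi>))
    \<and> (Dstable_ideal \<phi> (D0A \<phi>))"
proof (intro conjI)
  show P1: "{M. Dsubmodule \<phi> M} = {I. Dstable_ideal \<phi> I}" using submod_eq by blast
  show "(0::'a) \<noteq> 1 \<longrightarrow> (Dsimple \<phi> \<longleftrightarrow> \<not> (\<exists>I. Dstable_ideal \<phi> I \<and> I \<noteq> {0} \<and> I \<noteq> UNIV))"
  proof
    assume "(0::'a) \<noteq> 1"
    then have "(UNIV::'a set) \<noteq> {0}" by (metis UNIV_I singletonD)
    then show "Dsimple \<phi> \<longleftrightarrow> \<not> (\<exists>I. Dstable_ideal \<phi> I \<and> I \<noteq> {0} \<and> I \<noteq> UNIV)"
      unfolding Dsimple_def using submod_eq by blast
  qed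
  show inv1: "\<forall>I. Dstable_ideal \<phi> I \<and> D0A \<phi> \<subseteq> I \<longrightarrow> capA (opsum I (D0 \<phi>)) = I"
    using capA_opsum by blast
  show inv2: "\<forall>J. Dideal \<phi> J \<and> D0 \<phi> \<subseteq> J \<longrightarrow> opsum (capA J) (D0 \<phi>) = J"
    using opsum_capA by blast
  show "bij_betw (\<lambda>I. opsum I (D0 \<phi>))
           {I. Dstable_ideal \<phi> I \<and> D0A \<phi> \<subseteq> I} {J. Dideal \<phi> J \<and> D0 \<phi> \<subseteq> J}"
  proof (rule bij_betw_byWitness[where f'=capA])
    show "\<forall>a\<in>{I. Dstable_ideal \<phi> I \<and> D0A \<phi> \<subseteq> I}. capA (opsum a (D0 \<phi>)) = a" using inv1 by blast
    show "\<forall>a'\<in>{J. Dideal \<phi> J \<and> D0 \<phi> \<subseteq> J}. opsum (capA a') (D0 \<phi>) = a'" using inv2 by blast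
    show "(\<lambda>I. opsum I (D0 \<phi>)) ` {I. Dstable_ideal \<phi> I \<and> D0A \<phi> \<subseteq> I} \<subseteq> {J. Dideal \<phi> J \<and> D0 \<phi> \<subseteq> J}"
      using opsum_Dideal D0_sub_opsum unfolding Dstable_ideal_def by blast
    show "capA ` {J. Dideal \<phi> J \<and> D0 \<phi> \<subseteq> J} \<subseteq> {I. Dstable_ideal \<phi> I \<and> D0A \<phi> \<subseteq> I}"
      using capA_Dstable D0A_capA by blast
  qed
  show eq: "D0A \<phi> = capA (DD0D \<phi>)" using D0A_eq[OF assms] .
  show "DD0D \<phi> = opsum (D0A \<phi>) (D0 \<phi>)"
    unfolding eq by (rule sym, rule opsum_capA[OF DD0D_Dideal D0_DD0D])
  show "Dideal \<phi> (DD0D \<phi>)" by (rule DD0D_Dideal)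
  show "D0 \<phi> \<subseteq> DD0D \<phi>" by (rule D0_DD0D)
  show "\<forall>J. Dideal \<phi> J \<and> D0 \<phi> \<subseteq> J \<longrightarrow> DD0D \<phi> \<subseteq> J" using DD0D_min by blast
  show "Dstable_ideal \<phi> (D0A \<phi>)" using eq capA_Dstable[OF DD0D_Dideal D0_DD0D] by simp
qed

end
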